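(* Let $G$ be a finite simple graph on $[n]$, $w:E(G)\to\mathbb Z_{>0}$ a weight function, $\Bbbk$ a field, $S=\Bbbk[x_1,\ldots,x_n]$ and $I(G_w)=\big((x_ix_j)^{w(i,j)}\mid\{i,j\}\in E(G)\big)$. Let $x^{\mathbf a}$ be a monomial not in $I(G_w)$ and let $U=\{i\mid\text{there exists } j \text{ with }\{i,j\}\in E(G)\text{ and } a_i<w(i,j)\le a_j\}$. Then $$\sqrt{I(G_w):x^{\mathbf a}}=I(G\setminus U)+(x_i\mid i\in U),$$ where $I(G\setminus U)$ is the edge ideal of the induced subgraph of $G$ on $[n]\setminus U$.
   Context: The edge ideal of a graph $H$ is $(x_ix_j\mid\{i,j\}\in E(H))$. $w(i,j)$ denotes the weight of edge $\{i,j\}$. *)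

theory Defs
  imports "HOL-Library.Poly_Mapping"
begin

type_synonym 'k mpoly = "(nat \<Rightarrow>\<^sub>0 nat) \<Rightarrow>\<^sub>0 'k"

definition polyring :: "nat \<Rightarrow> 'k::field mpoly set" where
  "polyring n = {p :: 'k mpoly. \<forall>m \<in> Poly_Mapping.keys p. Poly_Mapping.keys m \<subseteq> {1..n}}"

definition Var :: "nat \<Rightarrow> 'k::field mpoly" where
  "Var i = Poly_Mapping.single (Poly_Mapping.single i 1) 1"

definition monom :: "(nat \<Rightarrow>\<^sub>0 nat) \<Rightarrow> 'k::field mpoly" where
  "monom a = Poly_Mapping.single a 1"

definition ideal_gen :: "nat \<Rightarrow> 'k::field mpoly set \<Rightarrow> 'k mpoly set" where
  "ideal_gen n B = {(\<Sum>b\<in>F. c b * b) | F c. finite F \<and> F \<subseteq> B \<and> (\<forall>b\<in>F. c b \<in> polyring n)}"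

definition ideal_sum :: "'k::field mpoly set \<Rightarrow> 'k mpoly set \<Rightarrow> 'k mpoly set" where
  "ideal_sum I J = {f + g | f g. f \<in> I \<and> g \<in> J}"

definition colon :: "nat \<Rightarrow> 'k::field mpoly set \<Rightarrow> 'k mpoly \<Rightarrow> 'k mpoly set" where
  "colon n I f = {g \<in> polyring n. g * f \<in> I}"

definition radical :: "nat \<Rightarrow> 'k::field mpoly set \<Rightarrow> 'k mpoly set" where
  "radical n I = {g \<in> polyring n. \<exists>m::nat. g ^ m \<in> I}"

definition simple_graph_on :: "nat \<Rightarrow> nat set set \<Rightarrow> bool" where
  "simple_graph_on n E \<longleftrightarrow> (\<forall>e\<in>E. \<exists>i j. e = {i, j} \<and> i \<noteq> j \<and> i \<in> {1..n} \<and> j \<in> {1..n})"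

definition edge_ideal :: "nat \<Rightarrow> nat set set \<Rightarrow> 'k::field mpoly set" where
  "edge_ideal n E = ideal_gen n {Var i * Var j | i j. {i, j} \<in> E}"

definition weighted_edge_ideal :: "nat \<Rightarrow> nat set set \<Rightarrow> (nat set \<Rightarrow> nat) \<Rightarrow> 'k::field mpoly set" where
  "weighted_edge_ideal n E w = ideal_gen n {(Var i * Var j) ^ w {i, j} | i j. {i, j} \<in> E}"

definition induced_edges :: "nat set set \<Rightarrow> nat set \<Rightarrow> nat set set" where
  "induced_edges E V = {e \<in> E. e \<subseteq> V}"

end

theory Submission
  imports Defs
begin


lemma keys_add_nat: "Poly_Mapping.keys (m + m' :: nat \<Rightarrow>\<^sub>0 nat) = Poly_Mapping.keys m \<union> Poly_Mapping.keys m'"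
  by (auto simp: in_keys_iff lookup_add)

definition mdvd :: "(nat \<Rightarrow>\<^sub>0 nat) \<Rightarrow> (nat \<Rightarrow>\<^sub>0 nat) \<Rightarrow> bool" where
  "mdvd s m \<longleftrightarrow> (\<forall>i. Poly_Mapping.lookup s i \<le> Poly_Mapping.lookup m i)"

lemma mdvd_diff: "mdvd s m \<Longrightarrow> m - s + s = m"
  by (rule poly_mapping_eqI) (simp add: lookup_add lookup_minus mdvd_def)

lemma mdvd_refl: "mdvd s s" by (simp add: mdvd_def)

lemma mdvd_trans: "mdvd s t \<Longrightarrow> mdvd t m \<Longrightarrow> mdvd s m"
  unfolding mdvd_def using order_trans by blast

lemma mdvd_addR: "mdvd s m \<Longrightarrow> mdvd s (m' + m)"
  by (auto simp: mdvd_def lookup_add intro: trans_le_add2)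

lemma keys_minus_nat: "Poly_Mapping.keys (m - s :: nat \<Rightarrow>\<^sub>0 nat) \<subseteq> Poly_Mapping.keys m"
  by (auto simp: in_keys_iff lookup_minus)

lemma polyring_iff: "p \<in> polyring n \<longleftrightarrow> (\<forall>m\<in>Poly_Mapping.keys p. Poly_Mapping.keys m \<subseteq> {1..n})"
  by (simp add: polyring_def)

lemma polyring_add: "p \<in> polyring n \<Longrightarrow> q \<in> polyring n \<Longrightarrow> p + q \<in> polyring n"
  unfolding polyring_iff using keys_add[of p q] by (meson Un_iff subsetD)

lemma polyring_diff: "p \<in> polyring n \<Longrightarrow> q \<in> polyring n \<Longrightarrow> p - q \<in> polyring n"
  unfolding polyring_iff using keys_diff[of p q] by (meson Un_iff subsetD)

lemma polyring_mult: "p \<in> polyring n \<Longrightarrow> q \<in> polyring n \<Longrightarrow> p * q \<in> polyring n"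
proof -
  assume p: "p \<in> polyring n" and q: "q \<in> polyring n"
  have "Poly_Mapping.keys m \<subseteq> {1..n}" if m: "m \<in> Poly_Mapping.keys (p * q)" for m
  proof -
    obtain a b where ab: "m = a + b" "a \<in> Poly_Mapping.keys p" "b \<in> Poly_Mapping.keys q"
      using keys_mult[of p q] m by blast
    have "Poly_Mapping.keys a \<subseteq> {1..n}" "Poly_Mapping.keys b \<subseteq> {1..n}"
      using p q ab(2,3) unfolding polyring_iff by auto
    then show ?thesis unfolding ab(1) keys_add_nat by blast
  qed
  then show ?thesis unfolding polyring_iff by blast
qed

lemma polyring_single: "Poly_Mapping.keys m \<subseteq> {1..n} \<Longrightarrow> Poly_Mapping.single m c \<in> polyring n"
  unfolding polyring_iff by simp

lemma polyring_one: "(1::'k::field mpoly) \<in> polyring n"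
  unfolding polyring_iff by simp

lemma polyring_zero: "(0::'k::field mpoly) \<in> polyring n"
  unfolding polyring_iff by simp

lemma polyring_pow: "p \<in> polyring n \<Longrightarrow> p ^ k \<in> polyring n"
  by (induction k) (simp_all add: polyring_mult polyring_one)

lemma polyring_of_nat: "(of_nat k :: 'k::field mpoly) \<in> polyring n"
proof -
  have "(of_nat k :: 'k mpoly) = Poly_Mapping.single 0 (of_nat k)" by simp
  moreover have "Poly_Mapping.single 0 (of_nat k :: 'k) \<in> polyring n" by (rule polyring_single) simp
  ultimately show ?thesis by simp
qed

lemma poly_expand: "p = (\<Sum>m\<in>Poly_Mapping.keys p. Poly_Mapping.single m (Poly_Mapping.lookup p m))"
proof -
  have *: "(\<Sum>m\<in>Poly_Mapping.keys p. Poly_Mapping.lookup (Poly_Mapping.single m (Poly_Mapping.lookup p m)) k) = Poly_Mapping.lookup p k" for k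
  proof -
    have "(\<Sum>m\<in>Poly_Mapping.keys p. Poly_Mapping.lookup (Poly_Mapping.single m (Poly_Mapping.lookup p m)) k)
       = (\<Sum>m\<in>Poly_Mapping.keys p. if m = k then Poly_Mapping.lookup p m else 0)"
      by (simp only: lookup_single when_def)
    also have "\<dots> = (if k \<in> Poly_Mapping.keys p then Poly_Mapping.lookup p k else 0)"
      by (rule sum.delta) simp
    also have "\<dots> = Poly_Mapping.lookup p k" by (simp add: in_keys_iff)
    finally show ?thesis .
  qed
  show ?thesis by (intro poly_mapping_eqI) (simp add: lookup_sum *)
qed

definition restr :: "('a \<Rightarrow> bool) \<Rightarrow> ('a \<Rightarrow>\<^sub>0 'b::comm_monoid_add) \<Rightarrow> ('a \<Rightarrow>\<^sub>0 'b)" where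
  "restr P p = (\<Sum>m\<in>{m\<in>Poly_Mapping.keys p. P m}. Poly_Mapping.single m (Poly_Mapping.lookup p m))"

lemma lookup_restr: "Poly_Mapping.lookup (restr P p) k = (if P k then Poly_Mapping.lookup p k else 0)"
  by (cases "k \<in> Poly_Mapping.keys p") (auto simp: restr_def lookup_sum lookup_single when_def in_keys_iff)

lemma keys_restr: "Poly_Mapping.keys (restr P p) = {m\<in>Poly_Mapping.keys p. P m}"
  by (auto simp: in_keys_iff lookup_restr split: if_splits)

lemma restr_split: "p = restr P p + restr (\<lambda>m. \<not> P m) p"
  by (rule poly_mapping_eqI) (simp add: lookup_add lookup_restr)



definition MI :: "nat \<Rightarrow> (nat \<Rightarrow>\<^sub>0 nat) set \<Rightarrow> 'k::field mpoly set" where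
  "MI n M = {p \<in> polyring n. \<forall>m\<in>Poly_Mapping.keys p. \<exists>s\<in>M. mdvd s m}"

lemma MI_polyring: "p \<in> MI n M \<Longrightarrow> p \<in> polyring n"
  by (simp add: MI_def)

lemma MI_zero: "0 \<in> MI n M"
  by (simp add: MI_def polyring_zero)

lemma MI_add: "p \<in> MI n M \<Longrightarrow> q \<in> MI n M \<Longrightarrow> p + q \<in> MI n M"
  unfolding MI_def using keys_add[of p q] polyring_add by blast

lemma MI_diff: "p \<in> MI n M \<Longrightarrow> q \<in> MI n M \<Longrightarrow> p - q \<in> MI n M"
  unfolding MI_def using keys_diff[of p q] polyring_diff by blast

lemma MI_mult: "r \<in> polyring n \<Longrightarrow> p \<in> MI n M \<Longrightarrow> r * p \<in> MI n M"
proof -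
  assume r: "r \<in> polyring n" and p: "p \<in> MI n M"
  have "r * p \<in> polyring n" using r p polyring_mult MI_polyring by blast
  moreover have "\<exists>s\<in>M. mdvd s m" if mk: "m \<in> Poly_Mapping.keys (r * p)" for m
  proof -
    obtain x y where "m = x + y" "y \<in> Poly_Mapping.keys p"
      using keys_mult[of r p] mk by blast
    moreover obtain s where "s \<in> M" "mdvd s y" using p calculation(2) by (auto simp: MI_def)
    ultimately show ?thesis using mdvd_addR by blast
  qed
  ultimately show ?thesis by (simp add: MI_def)
qed

lemma MI_sum: "finite A \<Longrightarrow> (\<And>x. x \<in> A \<Longrightarrow> f x \<in> MI n M) \<Longrightarrow> sum f A \<in> MI n M"
  by (induction A rule: finite_induct) (auto intro: MI_add MI_zero)

lemma MI_single: "Poly_Mapping.keys m \<subseteq> {1..n} \<Longrightarrow> s \<in> M \<Longrightarrow> mdvd s m \<Longrightarrow> Poly_Mapping.single m c \<in> MI n M"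
  by (auto simp: MI_def polyring_single)

lemma MI_mono: "(\<And>s. s \<in> M1 \<Longrightarrow> \<exists>t\<in>M2. mdvd t s) \<Longrightarrow> MI n M1 \<subseteq> MI n M2"
proof
  fix p assume p: "p \<in> MI n M1" and h: "\<And>s. s \<in> M1 \<Longrightarrow> \<exists>t\<in>M2. mdvd t s"
  have "\<exists>t\<in>M2. mdvd t m" if mk: "m \<in> Poly_Mapping.keys p" for m
  proof -
    obtain s where "s \<in> M1" "mdvd s m" using p mk by (auto simp: MI_def)
    then show ?thesis using h mdvd_trans by blast
  qed
  then show "p \<in> MI n M2" using p by (simp add: MI_def)
qed

lemma ig_zero: "0 \<in> ideal_gen n B"
  unfolding ideal_gen_def by (rule CollectI, rule exI[of _ "{}"], rule exI[of _ "\<lambda>_. 0"]) simp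

lemma ig_intro:
  assumes "finite F" "F \<subseteq> B" "\<forall>b\<in>F. c b \<in> polyring n"
  shows "(\<Sum>b\<in>F. c b * b) \<in> ideal_gen n B"
  unfolding ideal_gen_def by (rule CollectI, rule exI[of _ F], rule exI[of _ c]) (use assms in simp)

lemma ig_add: assumes "p \<in> ideal_gen n B" "q \<in> ideal_gen n B" shows "p + q \<in> ideal_gen n B"
proof -
  obtain F1 c1 where 1: "p = (\<Sum>b\<in>F1. c1 b * b)" "finite F1" "F1 \<subseteq> B" "\<forall>b\<in>F1. c1 b \<in> polyring n"
    using assms(1) unfolding ideal_gen_def by blast
  obtain F2 c2 where 2: "q = (\<Sum>b\<in>F2. c2 b * b)" "finite F2" "F2 \<subseteq> B" "\<forall>b\<in>F2. c2 b \<in> polyring n"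
    using assms(2) unfolding ideal_gen_def by blast
  define c where "c b = (if b \<in> F1 then c1 b else 0) + (if b \<in> F2 then c2 b else 0)" for b
  have "(\<Sum>b\<in>F1 \<union> F2. c b * b) = (\<Sum>b\<in>F1 \<union> F2. (if b \<in> F1 then c1 b * b else 0) + (if b \<in> F2 then c2 b * b else 0))"
    by (rule sum.cong) (auto simp: c_def distrib_right)
  also have "\<dots> = (\<Sum>b\<in>F1 \<union> F2. (if b \<in> F1 then c1 b * b else 0)) + (\<Sum>b\<in>F1 \<union> F2. (if b \<in> F2 then c2 b * b else 0))"
    by (rule sum.distrib)
  also have "\<dots> = p + q"
    using 1 2 by (simp add: sum.inter_restrict[symmetric] Int_absorb1 Int_absorb2 Int_commute)
  finally have "p + q = (\<Sum>b\<in>F1 \<union> F2. c b * b)" by simp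
  moreover have "\<forall>b\<in>F1 \<union> F2. c b \<in> polyring n"
    using 1 2 by (auto simp: c_def intro!: polyring_add polyring_zero)
  ultimately show ?thesis using 1 2 ig_intro[of "F1 \<union> F2" B c n] by simp
qed

lemma ig_mult: assumes "r \<in> polyring n" "p \<in> ideal_gen n B" shows "r * p \<in> ideal_gen n B"
proof -
  obtain F c where 1: "p = (\<Sum>b\<in>F. c b * b)" "finite F" "F \<subseteq> B" "\<forall>b\<in>F. c b \<in> polyring n"
    using assms(2) unfolding ideal_gen_def by blast
  have "r * p = (\<Sum>b\<in>F. (r * c b) * b)" using 1 by (simp add: sum_distrib_left mult.assoc)
  moreover have "\<forall>b\<in>F. r * c b \<in> polyring n" using 1 assms(1) polyring_mult by blast
  ultimately show ?thesis using 1 ig_intro[of F B "\<lambda>b. r * c b" n] by simp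
qed

lemma ig_gen: assumes "b \<in> B" shows "b \<in> ideal_gen n B"
proof -
  have "(\<Sum>x\<in>{b}. (\<lambda>_. 1) x * x) \<in> ideal_gen n B"
    by (rule ig_intro) (use assms polyring_one in auto)
  then show ?thesis by simp
qed

lemma ig_sum: "finite A \<Longrightarrow> (\<And>x. x \<in> A \<Longrightarrow> f x \<in> ideal_gen n B) \<Longrightarrow> sum f A \<in> ideal_gen n B"
  by (induction A rule: finite_induct) (auto intro: ig_add ig_zero)

lemma keys_monom: "Poly_Mapping.keys (monom s :: 'k::field mpoly) = {s}"
  by (simp add: monom_def)

lemma ideal_gen_MI:
  assumes "\<forall>s\<in>M. Poly_Mapping.keys s \<subseteq> {1..n}"
  shows "ideal_gen n (monom ` M) = (MI n M :: 'k::field mpoly set)"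
proof
  show "ideal_gen n (monom ` M) \<subseteq> (MI n M :: 'k mpoly set)"
  proof
    fix p :: "'k mpoly" assume "p \<in> ideal_gen n (monom ` M)"
    then obtain F c where 1: "p = (\<Sum>b\<in>F. c b * b)" "finite F" "F \<subseteq> monom ` M" "\<forall>b\<in>F. c b \<in> polyring n"
      unfolding ideal_gen_def by blast
    have cb: "c b * b \<in> MI n M" if bF: "b \<in> F" for b
    proof -
      obtain s where s: "s \<in> M" "b = monom s" using 1 bF by blast
      have "b \<in> MI n M" unfolding s(2) monom_def
        using assms s(1) by (intro MI_single[OF _ _ mdvd_refl]) auto
      then show ?thesis using 1 bF MI_mult by blast
    qed
    have "(\<Sum>b\<in>F. c b * b) \<in> MI n M" by (rule MI_sum[OF 1(2) cb])
    then show "p \<in> MI n M" using 1(1) by simp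
  qed
next
  show "(MI n M :: 'k mpoly set) \<subseteq> ideal_gen n (monom ` M)"
  proof
    fix p :: "'k mpoly" assume p: "p \<in> MI n M"
    have tm: "Poly_Mapping.single m (Poly_Mapping.lookup p m) \<in> ideal_gen n (monom ` M)"
      if m: "m \<in> Poly_Mapping.keys p" for m
    proof -
      obtain s where s: "s \<in> M" "mdvd s m" using p m by (auto simp: MI_def)
      have km: "Poly_Mapping.keys m \<subseteq> {1..n}" using p m by (auto simp: MI_def polyring_iff)
      have eq: "Poly_Mapping.single m (Poly_Mapping.lookup p m) = Poly_Mapping.single (m - s) (Poly_Mapping.lookup p m) * monom s"
        by (simp add: monom_def mult_single mdvd_diff[OF s(2)])
      have pr: "Poly_Mapping.single (m - s) (Poly_Mapping.lookup p m) \<in> polyring n"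
        using km keys_minus_nat[of m s] by (intro polyring_single) auto
      have "monom s \<in> monom ` M" using s(1) by (rule imageI)
      then have "(monom s :: 'k mpoly) \<in> ideal_gen n (monom ` M)" by (rule ig_gen)
      then show ?thesis unfolding eq by (rule ig_mult[OF pr])
    qed
    have "(\<Sum>m\<in>Poly_Mapping.keys p. Poly_Mapping.single m (Poly_Mapping.lookup p m)) \<in> ideal_gen n (monom ` M)"
      by (rule ig_sum) (simp_all add: tm)
    then show "p \<in> ideal_gen n (monom ` M)" by (simp only: poly_expand[symmetric])
  qed
qed





lemma mult_monom_expand:
  "g * (monom a :: 'k::field mpoly) = (\<Sum>m\<in>Poly_Mapping.keys g. Poly_Mapping.single (m + a) (Poly_Mapping.lookup g m))"
  by (subst poly_expand[of g]) (simp add: sum_distrib_right monom_def mult_single)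

lemma lookup_mult_monom:
  "Poly_Mapping.lookup (g * (monom a :: 'k::field mpoly)) k =
     (if \<exists>m\<in>Poly_Mapping.keys g. k = m + a then Poly_Mapping.lookup g (k - a) else 0)"
proof (cases "\<exists>m\<in>Poly_Mapping.keys g. k = m + a")
  case True
  then obtain m0 where m0: "m0 \<in> Poly_Mapping.keys g" "k = m0 + a" by blast
  have "Poly_Mapping.lookup (g * monom a) k = (\<Sum>m\<in>Poly_Mapping.keys g. if m = m0 then Poly_Mapping.lookup g m else 0)"
    unfolding mult_monom_expand lookup_sum m0(2)
    by (intro sum.cong) (auto simp: lookup_single when_def)
  also have "\<dots> = Poly_Mapping.lookup g m0" using m0(1) by simp
  finally show ?thesis using True m0 by simp
next
  case False
  then show ?thesis unfolding mult_monom_expand lookup_sum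
    by (auto simp: lookup_single when_def intro!: sum.neutral)
qed

lemma keys_mult_monom: "Poly_Mapping.keys (g * (monom a :: 'k::field mpoly)) = (\<lambda>m. m + a) ` Poly_Mapping.keys g"
proof (intro set_eqI iffI)
  fix x assume "x \<in> Poly_Mapping.keys (g * (monom a :: 'k mpoly))"
  then have "Poly_Mapping.lookup (g * (monom a :: 'k mpoly)) x \<noteq> 0" by (simp add: in_keys_iff)
  then have "\<exists>m\<in>Poly_Mapping.keys g. x = m + a" unfolding lookup_mult_monom by (auto split: if_splits)
  then show "x \<in> (\<lambda>m. m + a) ` Poly_Mapping.keys g" by blast
next
  fix x assume "x \<in> (\<lambda>m. m + a) ` Poly_Mapping.keys g"
  then obtain m where m: "m \<in> Poly_Mapping.keys g" "x = m + a" by blast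
  then have "Poly_Mapping.lookup (g * (monom a :: 'k mpoly)) x = Poly_Mapping.lookup g m"
    unfolding lookup_mult_monom by auto
  then show "x \<in> Poly_Mapping.keys (g * (monom a :: 'k mpoly))" using m(1) by (simp add: in_keys_iff)
qed

lemma mdvd_shift: "mdvd s (m + a) \<longleftrightarrow> mdvd (s - a) m"
  by (simp add: mdvd_def lookup_add lookup_minus le_diff_conv)

lemma colon_MI:
  assumes "Poly_Mapping.keys a \<subseteq> {1..n}"
  shows "colon n (MI n M) (monom a :: 'k::field mpoly) = MI n ((\<lambda>s. s - a) ` M)"
proof -
  have ma: "(monom a :: 'k mpoly) \<in> polyring n" using assms by (simp add: monom_def polyring_single)
  show ?thesis
    unfolding colon_def MI_def using polyring_mult[OF _ ma]
    by (auto simp: keys_mult_monom mdvd_shift)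
qed

definition sq :: "(nat \<Rightarrow>\<^sub>0 nat) \<Rightarrow> (nat \<Rightarrow>\<^sub>0 nat)" where
  "sq s = (\<Sum>i\<in>Poly_Mapping.keys s. Poly_Mapping.single i 1)"

lemma lookup_sq: "Poly_Mapping.lookup (sq s) i = (if i \<in> Poly_Mapping.keys s then 1 else 0)"
proof -
  have "Poly_Mapping.lookup (sq s) i = (\<Sum>k\<in>Poly_Mapping.keys s. if k = i then 1 else 0)"
    unfolding sq_def lookup_sum by (simp only: lookup_single when_def)
  also have "\<dots> = (if i \<in> Poly_Mapping.keys s then 1 else 0)" by (rule sum.delta) simp
  finally show ?thesis .
qed

lemma mdvd_sq: "mdvd (sq s) m \<longleftrightarrow> Poly_Mapping.keys s \<subseteq> Poly_Mapping.keys m"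
proof
  assume h: "mdvd (sq s) m"
  show "Poly_Mapping.keys s \<subseteq> Poly_Mapping.keys m"
  proof
    fix i assume i: "i \<in> Poly_Mapping.keys s"
    have "Poly_Mapping.lookup (sq s) i \<le> Poly_Mapping.lookup m i" using h by (simp add: mdvd_def)
    then have "1 \<le> Poly_Mapping.lookup m i" using i by (simp add: lookup_sq)
    then show "i \<in> Poly_Mapping.keys m" by (simp add: in_keys_iff)
  qed
next
  assume h: "Poly_Mapping.keys s \<subseteq> Poly_Mapping.keys m"
  show "mdvd (sq s) m" unfolding mdvd_def
  proof
    fix i show "Poly_Mapping.lookup (sq s) i \<le> Poly_Mapping.lookup m i"
    proof (cases "i \<in> Poly_Mapping.keys s")
      case True
      then have "i \<in> Poly_Mapping.keys m" using h by blast
      then show ?thesis using True by (simp add: lookup_sq in_keys_iff Suc_le_eq)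
    next
      case False then show ?thesis by (simp add: lookup_sq)
    qed
  qed
qed

definition avoid :: "nat set \<Rightarrow> 'k::field mpoly \<Rightarrow> bool" where
  "avoid C p \<longleftrightarrow> (\<forall>m\<in>Poly_Mapping.keys p. Poly_Mapping.keys m \<inter> C = {})"

definition hit :: "nat set \<Rightarrow> 'k::field mpoly \<Rightarrow> bool" where
  "hit C p \<longleftrightarrow> (\<forall>m\<in>Poly_Mapping.keys p. Poly_Mapping.keys m \<inter> C \<noteq> {})"

lemma avoid_mult: "avoid C p \<Longrightarrow> avoid C q \<Longrightarrow> avoid C (p * q)"
proof -
  assume p: "avoid C p" and q: "avoid C q"
  have "Poly_Mapping.keys m \<inter> C = {}" if mk: "m \<in> Poly_Mapping.keys (p * q)" for m
  proof -
    obtain x y where xy: "m = x + y" "x \<in> Poly_Mapping.keys p" "y \<in> Poly_Mapping.keys q"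
      using keys_mult[of p q] mk by blast
    have "Poly_Mapping.keys x \<inter> C = {}" "Poly_Mapping.keys y \<inter> C = {}"
      using p q xy(2,3) unfolding avoid_def by blast+
    then show ?thesis unfolding xy(1) keys_add_nat by blast
  qed
  then show ?thesis unfolding avoid_def by blast
qed

lemma avoid_one: "avoid C (1 :: 'k::field mpoly)"
  by (simp add: avoid_def)

lemma avoid_pow: "avoid C p \<Longrightarrow> avoid C (p ^ k)"
  by (induction k) (simp_all add: avoid_mult avoid_one)

lemma hit_mult: "hit C p \<Longrightarrow> hit C (p * q)"
proof -
  assume p: "hit C p"
  have "Poly_Mapping.keys m \<inter> C \<noteq> {}" if mk: "m \<in> Poly_Mapping.keys (p * q)" for m
  proof -
    obtain x y where xy: "m = x + y" "x \<in> Poly_Mapping.keys p" "y \<in> Poly_Mapping.keys q"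
      using keys_mult[of p q] mk by blast
    have "Poly_Mapping.keys x \<inter> C \<noteq> {}"
      using p xy(2) unfolding hit_def by blast
    then show ?thesis unfolding xy(1) keys_add_nat by blast
  qed
  then show ?thesis unfolding hit_def by blast
qed

lemma hit_diff: "hit C p \<Longrightarrow> hit C q \<Longrightarrow> hit C (p - q)"
  unfolding hit_def using keys_diff[of p q] by blast

lemma binom_split: "\<exists>r. (x + y :: 'a::comm_ring_1) ^ k = x ^ k + y * r"
proof (induction k)
  case 0 show ?case by (auto intro: exI[of _ 0])
next
  case (Suc k)
  then obtain r where r: "(x + y) ^ k = x ^ k + y * r" by blast
  have "(x + y) ^ Suc k = x ^ Suc k + y * (x * r + x ^ k + y * r)"
    by (simp add: r algebra_simps)
  then show ?case by blast
qed

lemma prime_avoid: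
  fixes g :: "'k::field mpoly"
  assumes "m0 \<in> Poly_Mapping.keys g" "Poly_Mapping.keys m0 \<inter> C = {}" "hit C (g ^ k)"
  shows False
proof -
  define g1 where "g1 = restr (\<lambda>m. Poly_Mapping.keys m \<inter> C = {}) g"
  define g0 where "g0 = restr (\<lambda>m. \<not> Poly_Mapping.keys m \<inter> C = {}) g"
  have g: "g = g1 + g0" unfolding g1_def g0_def by (rule restr_split)
  have "m0 \<in> Poly_Mapping.keys g1" using assms by (simp add: g1_def keys_restr)
  then have g1nz: "g1 \<noteq> 0" by auto
  have "avoid C g1" by (auto simp: avoid_def g1_def keys_restr)
  then have av: "avoid C (g1 ^ k)" by (rule avoid_pow)
  have h0: "hit C g0" by (auto simp: hit_def g0_def keys_restr)
  obtain r where r: "g ^ k = g1 ^ k + g0 * r" using binom_split g by metis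
  have "hit C (g1 ^ k)"
    using hit_diff[OF assms(3) hit_mult[OF h0, of r]] r by simp
  moreover have "g1 ^ k \<noteq> 0" using g1nz by simp
  then obtain m where "m \<in> Poly_Mapping.keys (g1 ^ k)" by (metis keys_eq_empty ex_in_conv)
  ultimately show False using av unfolding avoid_def hit_def by blast
qed

lemma single_pow: "\<exists>m'. Poly_Mapping.single m c ^ K = Poly_Mapping.single m' (c ^ K) \<and> (\<forall>i. Poly_Mapping.lookup m' i = K * Poly_Mapping.lookup m i)"
proof (induction K)
  case 0 show ?case by (auto intro!: exI[of _ 0])
next
  case (Suc K)
  then obtain m' where m': "Poly_Mapping.single m c ^ K = Poly_Mapping.single m' (c ^ K)" "\<forall>i. Poly_Mapping.lookup m' i = K * Poly_Mapping.lookup m i" by blast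
  have "Poly_Mapping.single m c ^ Suc K = Poly_Mapping.single (m + m') (c ^ Suc K)"
    using m' by (simp add: mult_single)
  moreover have "\<forall>i. Poly_Mapping.lookup (m + m') i = Suc K * Poly_Mapping.lookup m i"
    using m' by (simp add: lookup_add)
  ultimately show ?case by blast
qed




lemma rad_add:
  assumes "p \<in> polyring n" "q \<in> polyring n" "p ^ a \<in> MI n M" "q ^ b \<in> MI n M"
  shows "(p + q) ^ (a + b) \<in> MI n M"
proof -
  have "(p + q) ^ (a + b) = (\<Sum>k\<le>a + b. of_nat (a + b choose k) * p ^ k * q ^ (a + b - k))"
    by (rule binomial_ring)
  also have "\<dots> \<in> MI n M"
  proof (rule MI_sum)
    fix k assume "k \<in> {..a + b}"
    show "of_nat (a + b choose k) * p ^ k * q ^ (a + b - k) \<in> MI n M"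
    proof (cases "a \<le> k")
      case True
      have "of_nat (a + b choose k) * p ^ k * q ^ (a + b - k) = (of_nat (a + b choose k) * p ^ (k - a) * q ^ (a + b - k)) * p ^ a"
      proof -
        have "p ^ k = p ^ (k - a) * p ^ a" using True by (simp add: power_add[symmetric])
        then show ?thesis by (simp add: mult_ac)
      qed
      moreover have "of_nat (a + b choose k) * p ^ (k - a) * q ^ (a + b - k) \<in> polyring n"
        using assms by (intro polyring_mult polyring_pow polyring_of_nat)
      ultimately show ?thesis using MI_mult assms(3) by metis
    next
      case False
      then have kb: "a + b - k = (a - k) + b" by simp
      have "of_nat (a + b choose k) * p ^ k * q ^ (a + b - k) = (of_nat (a + b choose k) * p ^ k * q ^ (a - k)) * q ^ b"
      proof -
        have "q ^ (a + b - k) = q ^ (a - k) * q ^ b" unfolding kb by (simp add: power_add)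
        then show ?thesis by (simp add: mult_ac)
      qed
      moreover have "of_nat (a + b choose k) * p ^ k * q ^ (a - k) \<in> polyring n"
        using assms by (intro polyring_mult polyring_pow polyring_of_nat)
      ultimately show ?thesis using MI_mult assms(4) by metis
    qed
  qed simp
  finally show ?thesis .
qed

lemma radical_MI: "radical n (MI n M :: 'k::field mpoly set) = MI n (sq ` M)"
proof
  show "radical n (MI n M :: 'k mpoly set) \<subseteq> MI n (sq ` M)"
  proof
    fix g :: "'k mpoly" assume "g \<in> radical n (MI n M)"
    then obtain k where g: "g \<in> polyring n" "g ^ k \<in> MI n M" by (auto simp: radical_def)
    show "g \<in> MI n (sq ` M)"
    proof (rule ccontr)
      assume "g \<notin> MI n (sq ` M)"
      then obtain m0 where m0: "m0 \<in> Poly_Mapping.keys g" "\<forall>s\<in>M. \<not> mdvd (sq s) m0"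
        using g(1) by (auto simp: MI_def)
      define C where "C = - Poly_Mapping.keys m0"
      have hk: "hit C (g ^ k)" unfolding hit_def
      proof
        fix m assume "m \<in> Poly_Mapping.keys (g ^ k)"
        then obtain s where s: "s \<in> M" "mdvd s m" using g(2) by (auto simp: MI_def)
        then obtain i where "i \<in> Poly_Mapping.keys s" "i \<notin> Poly_Mapping.keys m0"
          using m0(2) by (auto simp: mdvd_sq)
        moreover have "i \<in> Poly_Mapping.keys m"
        proof -
          have "Poly_Mapping.lookup s i \<le> Poly_Mapping.lookup m i" using s(2) by (simp add: mdvd_def)
          moreover have "Poly_Mapping.lookup s i \<noteq> 0" using calculation(1) \<open>i \<in> Poly_Mapping.keys s\<close> by (simp add: in_keys_iff)
          ultimately show ?thesis by (simp add: in_keys_iff)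
        qed
        ultimately show "Poly_Mapping.keys m \<inter> C \<noteq> {}" by (auto simp: C_def)
      qed
      have "Poly_Mapping.keys m0 \<inter> C = {}" by (auto simp: C_def)
      then show False using prime_avoid[OF m0(1) _ hk] by blast
    qed
  qed
next
  show "MI n (sq ` M) \<subseteq> radical n (MI n M :: 'k mpoly set)"
  proof
    fix g :: "'k mpoly" assume g: "g \<in> MI n (sq ` M)"
    have tm2: "Poly_Mapping.single m (Poly_Mapping.lookup g m) \<in> polyring n \<and>
       (\<exists>K. Poly_Mapping.single m (Poly_Mapping.lookup g m) ^ K \<in> MI n M)"
      if m: "m \<in> Poly_Mapping.keys g" for m
    proof -
      obtain s where s: "s \<in> M" "mdvd (sq s) m" using g m by (auto simp: MI_def)
      have km: "Poly_Mapping.keys m \<subseteq> {1..n}" using g m by (auto simp: MI_def polyring_iff)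
      define K where "K = (\<Sum>i\<in>Poly_Mapping.keys s. Poly_Mapping.lookup s i)"
      obtain m' where m': "Poly_Mapping.single m (Poly_Mapping.lookup g m) ^ K = Poly_Mapping.single m' (Poly_Mapping.lookup g m ^ K)"
        "\<forall>i. Poly_Mapping.lookup m' i = K * Poly_Mapping.lookup m i"
        using single_pow by blast
      have "mdvd s m'" unfolding mdvd_def
      proof
        fix i show "Poly_Mapping.lookup s i \<le> Poly_Mapping.lookup m' i"
        proof (cases "i \<in> Poly_Mapping.keys s")
          case True
          then have "i \<in> Poly_Mapping.keys m" using s(2) by (auto simp: mdvd_sq)
          then have "1 \<le> Poly_Mapping.lookup m i" by (auto simp: in_keys_iff)
          moreover have "Poly_Mapping.lookup s i \<le> K" unfolding K_def
            using True by (intro member_le_sum) auto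
          ultimately show ?thesis using m'(2)
            by (metis mult.right_neutral mult_le_mono order_trans le_refl)
        next
          case False then show ?thesis by (simp add: in_keys_iff)
        qed
      qed
      moreover have "Poly_Mapping.keys m' \<subseteq> {1..n}"
        using km m'(2) by (auto simp: in_keys_iff)
      ultimately have "Poly_Mapping.single m (Poly_Mapping.lookup g m) ^ K \<in> MI n M"
        unfolding m'(1) using s(1) by (intro MI_single)
      moreover have "Poly_Mapping.single m (Poly_Mapping.lookup g m) \<in> polyring n"
        using km by (rule polyring_single)
      ultimately show ?thesis by blast
    qed
    have gen: "finite A \<Longrightarrow> (\<forall>m\<in>A. f m \<in> polyring n \<and> (\<exists>K. f m ^ K \<in> MI n M)) \<Longrightarrow>
      sum f A \<in> polyring n \<and> (\<exists>K. sum f A ^ K \<in> MI n M)" for A and f :: "_ \<Rightarrow> 'k mpoly"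
    proof (induction A rule: finite_induct)
      case empty
      then show ?case using polyring_zero MI_zero by (metis power_one_right sum.empty)
    next
      case (insert x F)
      then obtain a b where "f x ^ a \<in> MI n M" "sum f F ^ b \<in> MI n M" by auto
      then show ?case using insert rad_add[of "f x" n "sum f F" a M b]
        by (auto intro: polyring_add)
    qed
    have "(\<Sum>m\<in>Poly_Mapping.keys g. Poly_Mapping.single m (Poly_Mapping.lookup g m)) \<in> polyring n \<and>
        (\<exists>K. (\<Sum>m\<in>Poly_Mapping.keys g. Poly_Mapping.single m (Poly_Mapping.lookup g m)) ^ K \<in> MI n M)"
      by (rule gen[of "Poly_Mapping.keys g" "\<lambda>m. Poly_Mapping.single m (Poly_Mapping.lookup g m)"]) (simp, use tm2 in blast)
    then have "g \<in> polyring n \<and> (\<exists>K. g ^ K \<in> MI n M)"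
      by (simp only: poly_expand[symmetric])
    then show "g \<in> radical n (MI n M)" by (simp add: radical_def)
  qed
qed



lemma ideal_sum_MI: "ideal_sum (MI n M1 :: 'k::field mpoly set) (MI n M2) = MI n (M1 \<union> M2)"
proof
  show "ideal_sum (MI n M1 :: 'k mpoly set) (MI n M2) \<subseteq> MI n (M1 \<union> M2)"
  proof
    fix p :: "'k mpoly" assume "p \<in> ideal_sum (MI n M1) (MI n M2)"
    then obtain f g where fg: "p = f + g" "f \<in> MI n M1" "g \<in> MI n M2" unfolding ideal_sum_def by blast
    have "MI n M1 \<subseteq> (MI n (M1 \<union> M2) :: 'k mpoly set)" by (rule MI_mono) (blast intro: mdvd_refl)
    moreover have "MI n M2 \<subseteq> (MI n (M1 \<union> M2) :: 'k mpoly set)" by (rule MI_mono) (blast intro: mdvd_refl)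
    ultimately show "p \<in> MI n (M1 \<union> M2)" using fg MI_add by blast
  qed
next
  show "MI n (M1 \<union> M2) \<subseteq> ideal_sum (MI n M1 :: 'k mpoly set) (MI n M2)"
  proof
    fix p :: "'k mpoly" assume p: "p \<in> MI n (M1 \<union> M2)"
    define P where "P m = (\<exists>s\<in>M1. mdvd s m)" for m
    have kp: "\<forall>m\<in>Poly_Mapping.keys p. Poly_Mapping.keys m \<subseteq> {1..n}" "\<forall>m\<in>Poly_Mapping.keys p. \<exists>s\<in>M1 \<union> M2. mdvd s m"
      using p by (auto simp: MI_def polyring_iff)
    have "restr P p \<in> MI n M1" "restr (\<lambda>m. \<not> P m) p \<in> MI n M2"
      unfolding MI_def polyring_iff keys_restr P_def mem_Collect_eq using kp by blast+
    then show "p \<in> ideal_sum (MI n M1) (MI n M2)"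
      unfolding ideal_sum_def using restr_split[of p P] by blast
  qed
qed


lemma edge_in:
  assumes "simple_graph_on n E" "{i, j} \<in> E"
  shows "i \<in> {1..n} \<and> j \<in> {1..n} \<and> i \<noteq> j"
proof -
  obtain i' j' where e: "{i, j} = {i', j'}" "i' \<noteq> j'" "i' \<in> {1..n}" "j' \<in> {1..n}"
    using assms unfolding simple_graph_on_def by blast
  then have "i \<in> {i', j'}" "j \<in> {i', j'}" by blast+
  then have "i \<in> {1..n}" "j \<in> {1..n}" using e by blast+
  moreover have "i \<noteq> j" using e by (metis doubleton_eq_iff)
  ultimately show ?thesis by blast
qed

lemma Var_mult: "(Var i * Var j :: 'k::field mpoly) = monom (Poly_Mapping.single i 1 + Poly_Mapping.single j 1)"
  by (simp add: Var_def monom_def mult_single)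

lemma Var_mult_pow: "(Var i * Var j :: 'k::field mpoly) ^ k = monom (Poly_Mapping.single i k + Poly_Mapping.single j k)"
proof (induction k)
  case 0 show ?case by (simp add: monom_def)
next
  case (Suc k)
  have e: "Poly_Mapping.single i 1 + Poly_Mapping.single j 1 + (Poly_Mapping.single i k + Poly_Mapping.single j k)
     = Poly_Mapping.single i (Suc k) + (Poly_Mapping.single j (Suc k) :: nat \<Rightarrow>\<^sub>0 nat)"
    by (rule poly_mapping_eqI) (simp add: lookup_add lookup_single when_def)
  have "(Var i * Var j :: 'k mpoly) ^ Suc k = (Var i * Var j) * (Var i * Var j) ^ k" by (rule power_Suc)
  also have "\<dots> = monom (Poly_Mapping.single i 1 + Poly_Mapping.single j 1) * monom (Poly_Mapping.single i k + Poly_Mapping.single j k)"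
    by (subst Suc) (simp only: Var_mult)
  also have "\<dots> = monom (Poly_Mapping.single i (Suc k) + Poly_Mapping.single j (Suc k))"
    by (simp only: monom_def mult_single e mult_1)
  finally show ?case .
qed

lemma keys_two: "Poly_Mapping.keys (Poly_Mapping.single i k + Poly_Mapping.single j k :: nat \<Rightarrow>\<^sub>0 nat) \<subseteq> {i, j}"
  by (auto simp: keys_add_nat)

lemma lookup_edge:
  assumes "(i::nat) \<noteq> j"
  shows "Poly_Mapping.lookup (Poly_Mapping.single i (w::nat) + Poly_Mapping.single j w - (a :: nat \<Rightarrow>\<^sub>0 nat)) k = (if k = i \<or> k = j then w - Poly_Mapping.lookup a k else 0)"
  using assms by (auto simp: lookup_minus lookup_add lookup_single when_def)

lemma keys_edge_diff:
  assumes "(i::nat) \<noteq> j"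
  shows "Poly_Mapping.keys (Poly_Mapping.single i (w::nat) + Poly_Mapping.single j w - (a :: nat \<Rightarrow>\<^sub>0 nat)) = {k \<in> {i, j}. Poly_Mapping.lookup a k < w}"
proof -
  have "k \<in> Poly_Mapping.keys (Poly_Mapping.single i w + Poly_Mapping.single j w - a) \<longleftrightarrow> (k = i \<or> k = j) \<and> Poly_Mapping.lookup a k < w" for k
    by (auto simp: in_keys_iff lookup_edge[OF assms])
  then show ?thesis by blast
qed

lemma mdvd_into_sq:
  assumes "\<forall>k. Poly_Mapping.lookup u k \<le> 1" "Poly_Mapping.keys u \<subseteq> Poly_Mapping.keys x"
  shows "mdvd u (sq x)"
  unfolding mdvd_def lookup_sq
proof
  fix k show "Poly_Mapping.lookup u k \<le> (if k \<in> Poly_Mapping.keys x then 1 else 0)"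
    using assms by (cases "k \<in> Poly_Mapping.keys x") (auto simp: in_keys_iff)
qed

lemma lookup_single1_le: "Poly_Mapping.lookup (Poly_Mapping.single (i::nat) (1::nat)) k \<le> 1"
  by (simp add: lookup_single when_def)

lemma lookup_two1_le: "(i::nat) \<noteq> j \<Longrightarrow> Poly_Mapping.lookup (Poly_Mapping.single i (1::nat) + Poly_Mapping.single j 1) k \<le> 1"
  by (auto simp: lookup_add lookup_single when_def)

lemma keys_two1: "Poly_Mapping.keys (Poly_Mapping.single (i::nat) (1::nat) + Poly_Mapping.single j 1) = {i, j}"
  by (auto simp: keys_add_nat)

theorem lemma2p13:
  fixes n :: nat and E :: "nat set set" and w :: "nat set \<Rightarrow> nat"
    and a :: "nat \<Rightarrow>\<^sub>0 nat"
  assumes "simple_graph_on n E"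
    and "\<forall>e\<in>E. w e > 0"
    and "Poly_Mapping.keys a \<subseteq> {1..n}"
    and "(monom a :: 'k::field mpoly) \<notin> weighted_edge_ideal n E w"
  defines "U \<equiv> {i. \<exists>j. {i, j} \<in> E \<and> Poly_Mapping.lookup a i < w {i, j} \<and> w {i, j} \<le> Poly_Mapping.lookup a j}"
  shows "radical n (colon n (weighted_edge_ideal n E w) (monom a :: 'k mpoly))
         = ideal_sum (edge_ideal n (induced_edges E ({1..n} - U))) (ideal_gen n (Var ` U))"
proof -
  define Mw where "Mw = {Poly_Mapping.single i (w {i, j}) + Poly_Mapping.single j (w {i, j}) | i j. {i, j} \<in> E}"
  define Me where "Me = {Poly_Mapping.single i (1::nat) + Poly_Mapping.single j 1 | i j. {i, j} \<in> induced_edges E ({1..n} - U)}"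
  define VU where "VU = (\<lambda>i. Poly_Mapping.single i (1::nat)) ` U"
  have inE: "i \<in> {1..n} \<and> j \<in> {1..n} \<and> i \<noteq> j" if "{i, j} \<in> E" for i j
    using edge_in[OF assms(1) that] .
  have kMw: "\<forall>s\<in>Mw. Poly_Mapping.keys s \<subseteq> {1..n}"
    unfolding Mw_def using inE keys_two by fastforce
  have W: "weighted_edge_ideal n E w = (MI n Mw :: 'k mpoly set)"
  proof -
    have "{(Var i * Var j :: 'k mpoly) ^ w {i, j} | i j. {i, j} \<in> E} = monom ` Mw"
      unfolding Var_mult_pow Mw_def by blast
    then show ?thesis unfolding weighted_edge_ideal_def using ideal_gen_MI[OF kMw] by simp
  qed
  have Ed: "edge_ideal n (induced_edges E ({1..n} - U)) = (MI n Me :: 'k mpoly set)"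
  proof -
    have "{(Var i * Var j :: 'k mpoly) | i j. {i, j} \<in> induced_edges E ({1..n} - U)} = monom ` Me"
      unfolding Var_mult Me_def by blast
    moreover have "\<forall>s\<in>Me. Poly_Mapping.keys s \<subseteq> {1..n}"
      unfolding Me_def induced_edges_def using inE keys_two by fastforce
    ultimately show ?thesis unfolding edge_ideal_def using ideal_gen_MI by metis
  qed
  have UE: "U \<subseteq> {1..n}" unfolding U_def using inE by blast
  have Vd: "ideal_gen n (Var ` U) = (MI n VU :: 'k mpoly set)"
  proof -
    have "(Var ` U :: 'k mpoly set) = monom ` VU"
      unfolding VU_def image_image by (simp add: Var_def monom_def)
    moreover have "\<forall>s\<in>VU. Poly_Mapping.keys s \<subseteq> {1..n}"
      unfolding VU_def using UE by auto
    ultimately show ?thesis using ideal_gen_MI by metis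
  qed
  have not_both: "\<not> (w {i, j} \<le> Poly_Mapping.lookup a i \<and> w {i, j} \<le> Poly_Mapping.lookup a j)"
    if ij: "{i, j} \<in> E" for i j
  proof
    assume h: "w {i, j} \<le> Poly_Mapping.lookup a i \<and> w {i, j} \<le> Poly_Mapping.lookup a j"
    have "mdvd (Poly_Mapping.single i (w {i, j}) + Poly_Mapping.single j (w {i, j})) a"
      using h inE[OF ij] by (auto simp: mdvd_def lookup_add lookup_single when_def)
    moreover have "Poly_Mapping.single i (w {i, j}) + Poly_Mapping.single j (w {i, j}) \<in> Mw"
      unfolding Mw_def using ij by blast
    ultimately have "(monom a :: 'k mpoly) \<in> MI n Mw"
      unfolding monom_def using assms(3) by (intro MI_single) auto
    then show False using assms(4) W by simp
  qed
  have L: "radical n (colon n (weighted_edge_ideal n E w) (monom a :: 'k mpoly)) = MI n (sq ` (\<lambda>s. s - a) ` Mw)"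
    unfolding W colon_MI[OF assms(3)] radical_MI ..
  have R: "ideal_sum (edge_ideal n (induced_edges E ({1..n} - U))) (ideal_gen n (Var ` U)) = (MI n (Me \<union> VU) :: 'k mpoly set)"
    unfolding Ed Vd ideal_sum_MI ..
  have D1: "\<exists>u\<in>Me \<union> VU. mdvd u t" if t: "t \<in> sq ` (\<lambda>s. s - a) ` Mw" for t
  proof -
    obtain i j where ij: "{i, j} \<in> E" and tdef: "t = sq (Poly_Mapping.single i (w {i, j}) + Poly_Mapping.single j (w {i, j}) - a)"
      using t unfolding Mw_def by blast
    have ne: "i \<noteq> j" using inE[OF ij] by blast
    have jie: "{j, i} = {i, j}" by blast
    have ji: "{j, i} \<in> E" "w {j, i} = w {i, j}" using ij by (simp_all only: jie)
    have K: "Poly_Mapping.keys (Poly_Mapping.single i (w {i, j}) + Poly_Mapping.single j (w {i, j}) - a)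
        = {k \<in> {i, j}. Poly_Mapping.lookup a k < w {i, j}}"
      by (rule keys_edge_diff[OF ne])
    show ?thesis
    proof (cases "i \<in> U \<and> Poly_Mapping.lookup a i < w {i, j}")
      case True
      then have "mdvd (Poly_Mapping.single i 1) t" unfolding tdef
        by (intro mdvd_into_sq) (auto simp: K lookup_single when_def)
      moreover have "Poly_Mapping.single i 1 \<in> VU" using True by (simp add: VU_def)
      ultimately show ?thesis by blast
    next
      case F1: False
      show ?thesis
      proof (cases "j \<in> U \<and> Poly_Mapping.lookup a j < w {i, j}")
        case True
        then have "mdvd (Poly_Mapping.single j 1) t" unfolding tdef
          by (intro mdvd_into_sq) (auto simp: K lookup_single when_def)
        moreover have "Poly_Mapping.single j 1 \<in> VU" using True by (simp add: VU_def)
        ultimately show ?thesis by blast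
      next
        case F2: False
        have ai: "Poly_Mapping.lookup a i < w {i, j}"
        proof (rule ccontr)
          assume "\<not> ?thesis"
          then have "w {i, j} \<le> Poly_Mapping.lookup a i" by simp
          moreover have "Poly_Mapping.lookup a j < w {i, j}" using not_both[OF ij] calculation by simp
          ultimately have "j \<in> U" unfolding U_def using ji by auto
          then show False using F2 \<open>Poly_Mapping.lookup a j < w {i, j}\<close> by blast
        qed
        have aj: "Poly_Mapping.lookup a j < w {i, j}"
        proof (rule ccontr)
          assume "\<not> ?thesis"
          then have "w {i, j} \<le> Poly_Mapping.lookup a j" by simp
          then have "i \<in> U" unfolding U_def using ij ai by auto
          then show False using F1 ai by blast
        qed
        have iU: "i \<notin> U" using F1 ai by blast
        have jU: "j \<notin> U" using F2 aj by blast
        have "{i, j} \<in> induced_edges E ({1..n} - U)"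
          unfolding induced_edges_def using ij iU jU inE[OF ij] by auto
        then have "Poly_Mapping.single i 1 + Poly_Mapping.single j 1 \<in> Me" unfolding Me_def by blast
        moreover have "mdvd (Poly_Mapping.single i 1 + Poly_Mapping.single j 1) t" unfolding tdef
          by (intro mdvd_into_sq) (auto simp: K keys_add_nat lookup_add lookup_single when_def ne ne[symmetric] ai aj)
        ultimately show ?thesis by blast
      qed
    qed
  qed
  have D2: "\<exists>t\<in>sq ` (\<lambda>s. s - a) ` Mw. mdvd t u" if u: "u \<in> Me \<union> VU" for u
  proof (cases "u \<in> VU")
    case True
    then obtain i where i: "i \<in> U" "u = Poly_Mapping.single i 1" unfolding VU_def by blast
    then obtain j where ij: "{i, j} \<in> E" "Poly_Mapping.lookup a i < w {i, j}" "w {i, j} \<le> Poly_Mapping.lookup a j"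
      unfolding U_def by blast
    have ne: "i \<noteq> j" using inE[OF ij(1)] by blast
    define s where "s = Poly_Mapping.single i (w {i, j}) + Poly_Mapping.single j (w {i, j})"
    have "s \<in> Mw" unfolding s_def Mw_def using ij(1) by blast
    moreover have "Poly_Mapping.keys (s - a) \<subseteq> Poly_Mapping.keys u"
      unfolding s_def keys_edge_diff[OF ne] i(2) using ij(3) by auto
    ultimately show ?thesis by (auto simp: mdvd_sq)
  next
    case False
    then have "u \<in> Me" using u by blast
    then obtain i j where ij: "{i, j} \<in> E" "u = Poly_Mapping.single i 1 + Poly_Mapping.single j 1"
      unfolding Me_def induced_edges_def by blast
    have ne: "i \<noteq> j" using inE[OF ij(1)] by blast
    define s where "s = Poly_Mapping.single i (w {i, j}) + Poly_Mapping.single j (w {i, j})"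
    have "s \<in> Mw" unfolding s_def Mw_def using ij(1) by blast
    moreover have "Poly_Mapping.keys (s - a) \<subseteq> Poly_Mapping.keys u"
      unfolding s_def keys_edge_diff[OF ne] ij(2) keys_two1 by auto
    ultimately show ?thesis by (auto simp: mdvd_sq)
  qed
  have "MI n (sq ` (\<lambda>s. s - a) ` Mw) = (MI n (Me \<union> VU) :: 'k mpoly set)"
  proof
    show "MI n (sq ` (\<lambda>s. s - a) ` Mw) \<subseteq> (MI n (Me \<union> VU) :: 'k mpoly set)"
      by (rule MI_mono) (rule D1)
    show "(MI n (Me \<union> VU) :: 'k mpoly set) \<subseteq> MI n (sq ` (\<lambda>s. s - a) ` Mw)"
      by (rule MI_mono) (rule D2)
  qed
  then show ?thesis using L R by simp
qed

end
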